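(* Let $A$ be a C*-algebra, let $\{p_i\}_{i\in I}$ be a family of mutually orthogonal projections in the multiplier algebra $M(A)$, and let $B$ be a *-subalgebra of $A$ such that $B\subseteq\bigoplus_{i,j\in I}B\cap(p_iAp_j)$ (i.e. every $b\in B$ is a finite sum of elements of the sets $B\cap(p_iAp_j)$) and such that $B\cap(p_iAp_i)$ is a core subalgebra of $A$ for every $i\in I$. Then $B$ is a core subalgebra of $A$.
   Context: A representation of a *-algebra $B$ is a multiplicative, *-preserving, linear map $\pi:B\to\mathcal B(H)$ for some Hilbert space $H$ (no continuity assumed). A *-subalgebra $B$ of a C*-algebra $A$ is a core subalgebra of $A$ if every representation of $B$ is continuous with respect to the norm induced from $A$. *)

theory Defs
  imports Complex_Main
begin

class complex_vector = real_vector +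
  fixes scaleC :: "complex \<Rightarrow> 'a \<Rightarrow> 'a"  (infixr \<open>*\<^sub>C\<close> 75)
  assumes scaleC_add_right: "scaleC c (x + y) = scaleC c x + scaleC c y"
    and scaleC_add_left: "scaleC (c + d) x = scaleC c x + scaleC d x"
    and scaleC_scaleC: "scaleC c (scaleC d x) = scaleC (c * d) x"
    and scaleC_one: "scaleC 1 x = x"
    and scaleR_scaleC: "scaleR r x = scaleC (complex_of_real r) x"

class complex_normed_vector = complex_vector + real_normed_vector +
  assumes norm_scaleC: "norm (scaleC c x) = cmod c * norm x"

class complex_normed_algebra = complex_normed_vector + real_normed_algebra +
  assumes scaleC_mult_left: "scaleC c x * y = scaleC c (x * y)"
    and scaleC_mult_right: "x * scaleC c y = scaleC c (x * y)"

text \<open>A (not necessarily unital) C*-algebra: a complete complex normed algebra with an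
  isometric-in-the-C*-sense involution.  The algebra A of the paper is the whole type.\<close>
class cstar_algebra = complex_normed_algebra + banach +
  fixes cstar :: "'a \<Rightarrow> 'a"
  assumes cstar_cstar: "cstar (cstar x) = x"
    and cstar_add: "cstar (x + y) = cstar x + cstar y"
    and cstar_scaleC: "cstar (scaleC c x) = scaleC (cnj c) (cstar x)"
    and cstar_mult: "cstar (x * y) = cstar y * cstar x"
    and cstar_identity: "norm (cstar x * x) = norm x * norm x"

class complex_inner = complex_normed_vector +
  fixes cinner :: "'a \<Rightarrow> 'a \<Rightarrow> complex"
  assumes cinner_commute: "cinner x y = cnj (cinner y x)"
    and cinner_add_left: "cinner (x + y) z = cinner x z + cinner y z"
    and cinner_scaleC_left: "cinner (scaleC c x) y = cnj c * cinner x y"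
    and cinner_ge_zero: "0 \<le> Re (cinner x x)"
    and cinner_eq_zero_iff: "cinner x x = 0 \<longleftrightarrow> x = 0"
    and norm_eq_sqrt_cinner: "norm x = sqrt (Re (cinner x x))"

class chilbert_space = complex_inner + complete_space

definition star_subalgebra :: "'a::cstar_algebra set \<Rightarrow> bool" where
  "star_subalgebra B \<longleftrightarrow> 0 \<in> B
     \<and> (\<forall>x\<in>B. \<forall>y\<in>B. x + y \<in> B)
     \<and> (\<forall>c. \<forall>x\<in>B. scaleC c x \<in> B)
     \<and> (\<forall>x\<in>B. \<forall>y\<in>B. x * y \<in> B)
     \<and> (\<forall>x\<in>B. cstar x \<in> B)"

definition bounded_operator :: "('h::chilbert_space \<Rightarrow> 'h) \<Rightarrow> bool" where
  "bounded_operator T \<longleftrightarrow> (\<forall>x y. T (x + y) = T x + T y)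
     \<and> (\<forall>c x. T (scaleC c x) = scaleC c (T x))
     \<and> (\<exists>K. \<forall>x. norm (T x) \<le> K * norm x)"

text \<open>A representation of the *-algebra B on the Hilbert space 'h: a multiplicative,
  *-preserving, complex-linear map from B into B('h).  No continuity is assumed.\<close>
definition representation :: "'a::cstar_algebra set \<Rightarrow> ('a \<Rightarrow> ('h::chilbert_space \<Rightarrow> 'h)) \<Rightarrow> bool" where
  "representation B \<pi> \<longleftrightarrow>
     (\<forall>b\<in>B. bounded_operator (\<pi> b))
     \<and> (\<forall>b1\<in>B. \<forall>b2\<in>B. \<pi> (b1 + b2) = (\<lambda>x. \<pi> b1 x + \<pi> b2 x))
     \<and> (\<forall>c. \<forall>b\<in>B. \<pi> (scaleC c b) = (\<lambda>x. scaleC c (\<pi> b x)))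
     \<and> (\<forall>b1\<in>B. \<forall>b2\<in>B. \<pi> (b1 * b2) = \<pi> b1 \<circ> \<pi> b2)
     \<and> (\<forall>b\<in>B. \<forall>x y. cinner (\<pi> b x) y = cinner x (\<pi> (cstar b) y))"

text \<open>Continuity of \<pi> on B, B carrying the norm of A and B('h) the operator norm
  (\<open>\<forall>x. norm (\<pi> b x - \<pi> b0 x) \<le> e * norm x\<close> says the operator norm of
  \<open>\<pi> b - \<pi> b0\<close> is at most e).\<close>
definition rep_continuous :: "'a::cstar_algebra set \<Rightarrow> ('a \<Rightarrow> ('h::chilbert_space \<Rightarrow> 'h)) \<Rightarrow> bool" where
  "rep_continuous B \<pi> \<longleftrightarrow>
     (\<forall>b0\<in>B. \<forall>e>0. \<exists>d>0. \<forall>b\<in>B. norm (b - b0) < d \<longrightarrow>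
        (\<forall>x. norm (\<pi> b x - \<pi> b0 x) \<le> e * norm x))"

text \<open>Core subalgebra, relative to representations on Hilbert spaces of type 'h.\<close>
definition core_subalgebra :: "'h::chilbert_space itself \<Rightarrow> 'a::cstar_algebra set \<Rightarrow> bool" where
  "core_subalgebra (_ :: 'h itself) B \<longleftrightarrow> star_subalgebra B \<and>
     (\<forall>\<pi> :: 'a \<Rightarrow> ('h \<Rightarrow> 'h). representation B \<pi> \<longrightarrow> rep_continuous B \<pi>)"

section \<open>Multiplier algebra M(A) as double centralizers\<close>

type_synonym 'a multiplier = "('a \<Rightarrow> 'a) \<times> ('a \<Rightarrow> 'a)"

definition double_centralizer :: "'a::cstar_algebra multiplier \<Rightarrow> bool" where
  "double_centralizer m \<longleftrightarrow> (\<forall>a b. a * fst m b = snd m a * b)"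

definition mult_mult :: "'a::cstar_algebra multiplier \<Rightarrow> 'a multiplier \<Rightarrow> 'a multiplier" where
  "mult_mult m n = (fst m \<circ> fst n, snd n \<circ> snd m)"

definition mult_star :: "'a::cstar_algebra multiplier \<Rightarrow> 'a multiplier" where
  "mult_star m = ((\<lambda>a. cstar (snd m (cstar a))), (\<lambda>a. cstar (fst m (cstar a))))"

definition mult_zero :: "'a::cstar_algebra multiplier" where
  "mult_zero = ((\<lambda>_. 0), (\<lambda>_. 0))"

definition mult_projection :: "'a::cstar_algebra multiplier \<Rightarrow> bool" where
  "mult_projection p \<longleftrightarrow> double_centralizer p \<and> mult_mult p p = p \<and> mult_star p = p"

text \<open>The set p A q = {p a q | a \<in> A} for multipliers p, q.\<close>
definition corner :: "'a::cstar_algebra multiplier \<Rightarrow> 'a multiplier \<Rightarrow> 'a set" where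
  "corner p q = {fst p (snd q a) | a. True}"

end

theory Submission imports Defs begin

lemma cstar_zero: "cstar (0::'a::cstar_algebra) = 0"
  using cstar_add[of "0::'a" 0] by simp

lemma zero_left_cancel:
  fixes d :: "'a::cstar_algebra"
  assumes "\<And>x. x * d = 0" shows "d = 0"
proof -
  have "norm (cstar d * d) = 0" using assms by simp
  then have "norm d * norm d = 0" by (simp add: cstar_identity)
  then show ?thesis by simp
qed

lemma zero_right_cancel:
  fixes d :: "'a::cstar_algebra"
  assumes "\<And>x. d * x = 0" shows "d = 0"
proof -
  have "x * cstar d = 0" for x
  proof -
    have "cstar (d * cstar x) = x * cstar d" by (simp add: cstar_mult cstar_cstar)
    then show ?thesis using assms[of "cstar x"] by (simp add: cstar_zero)
  qed
  then have "cstar d = 0" by (rule zero_left_cancel)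
  then show ?thesis by (metis cstar_cstar cstar_zero)
qed

lemma norm_le_cstar: "norm (x::'a::cstar_algebra) \<le> norm (cstar x)"
proof (cases "norm x = 0")
  case False
  have "norm x * norm x = norm (cstar x * x)" by (simp add: cstar_identity)
  also have "\<dots> \<le> norm (cstar x) * norm x" by (rule norm_mult_ineq)
  finally show ?thesis using False by (simp add: mult_le_cancel_right)
qed simp

lemma norm_cstar: "norm (cstar (x::'a::cstar_algebra)) = norm x"
  using norm_le_cstar[of x] norm_le_cstar[of "cstar x"] by (simp add: cstar_cstar)

context
  fixes m :: "'a::cstar_algebra multiplier"
  assumes dc: "double_centralizer m"
begin

lemma dc_eq: "a * fst m b = snd m a * b"
  using dc by (simp add: double_centralizer_def)

lemma L_mult: "fst m (a * b) = fst m a * b"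
proof -
  have "x * (fst m (a * b) - fst m a * b) = 0" for x
    by (simp add: right_diff_distrib dc_eq mult.assoc[symmetric])
  then show ?thesis using zero_left_cancel by fastforce
qed

lemma R_mult: "snd m (a * b) = a * snd m b"
proof -
  have "(snd m (a * b) - a * snd m b) * x = 0" for x
    by (simp add: left_diff_distrib dc_eq[symmetric] mult.assoc)
  then show ?thesis using zero_right_cancel by fastforce
qed

lemma L_add: "fst m (a + b) = fst m a + fst m b"
proof -
  have "x * (fst m (a + b) - fst m a - fst m b) = 0" for x
    by (simp add: right_diff_distrib dc_eq distrib_left)
  then have "fst m (a + b) - fst m a - fst m b = 0" by (rule zero_left_cancel)
  then show ?thesis by (simp add: algebra_simps)
qed

lemma R_add: "snd m (a + b) = snd m a + snd m b"
proof -
  have "(snd m (a + b) - snd m a - snd m b) * x = 0" for x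
    by (simp add: left_diff_distrib dc_eq[symmetric] distrib_right)
  then have "snd m (a + b) - snd m a - snd m b = 0" by (rule zero_right_cancel)
  then show ?thesis by (simp add: algebra_simps)
qed

lemma L_zero: "fst m 0 = 0" using L_add[of 0 0] by simp
lemma R_zero: "snd m 0 = 0" using R_add[of 0 0] by simp

lemma L_sum: "fst m (sum f F) = (\<Sum>i\<in>F. fst m (f i))"
  by (induction F rule: infinite_finite_induct) (auto simp: L_zero L_add)
lemma R_sum: "snd m (sum f F) = (\<Sum>i\<in>F. snd m (f i))"
  by (induction F rule: infinite_finite_induct) (auto simp: R_zero R_add)
end

lemma LR_comm:
  assumes "double_centralizer m" "double_centralizer n"
  shows "fst m (snd n z) = snd n (fst m z)"
proof -
  have "x * (snd n (fst m z) - fst m (snd n z)) = 0" for x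
  proof -
    have "x * snd n (fst m z) = snd n (x * fst m z)" using R_mult[OF assms(2)] by simp
    also have "\<dots> = snd n (snd m x * z)" using dc_eq[OF assms(1)] by simp
    also have "\<dots> = snd m x * snd n z" using R_mult[OF assms(2)] by simp
    also have "\<dots> = x * fst m (snd n z)" using dc_eq[OF assms(1)] by simp
    finally show ?thesis by (simp add: right_diff_distrib)
  qed
  then show ?thesis using zero_left_cancel by fastforce
qed

context
  fixes p :: "'a::cstar_algebra multiplier"
  assumes pr: "mult_projection p"
begin

lemma P_dc: "double_centralizer p" using pr by (simp add: mult_projection_def)

lemma LL: "fst p (fst p a) = fst p a"
proof -
  have "fst p \<circ> fst p = fst p" using pr
    by (metis fst_conv mult_mult_def mult_projection_def)
  then show ?thesis by (metis comp_apply)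
qed

lemma RR: "snd p (snd p a) = snd p a"
proof -
  have "snd p \<circ> snd p = snd p" using pr
    by (metis snd_conv mult_mult_def mult_projection_def)
  then show ?thesis by (metis comp_apply)
qed

lemma L_star: "fst p a = cstar (snd p (cstar a))"
proof -
  have "(\<lambda>a. cstar (snd p (cstar a))) = fst p" using pr
    by (metis fst_conv mult_star_def mult_projection_def)
  then show ?thesis by metis
qed

lemma R_star: "snd p a = cstar (fst p (cstar a))"
  by (simp add: L_star cstar_cstar)

lemma norm_L: "norm (fst p a) \<le> norm a"
proof (cases "norm (fst p a) = 0")
  case False
  have "cstar (fst p a) = snd p (cstar a)" by (simp add: L_star cstar_cstar)
  then have "cstar (fst p a) * fst p a = cstar a * fst p a"
    using dc_eq[OF P_dc, of "cstar a" "fst p a"] LL by simp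
  then have "norm (fst p a) * norm (fst p a) = norm (cstar a * fst p a)"
    by (metis cstar_identity)
  also have "\<dots> \<le> norm a * norm (fst p a)" using norm_mult_ineq norm_cstar by metis
  finally show ?thesis using False by (simp add: mult_le_cancel_right)
qed simp

lemma norm_R: "norm (snd p a) \<le> norm a"
  using norm_L[of "cstar a"] by (simp add: R_star norm_cstar)
end


lemma cinner_zero_left: "cinner 0 (y::'h::complex_inner) = 0" using cinner_add_left[of 0 0 y] by simp
lemma cinner_zero_right: "cinner (x::'h::complex_inner) 0 = 0" using cinner_commute[of x 0] cinner_zero_left[of x] by simp
context fixes x y z :: "'h::complex_inner" begin
lemma cinner_add_right: "cinner x (y + z) = cinner x y + cinner x z"
  by (metis cinner_commute cinner_add_left complex_cnj_add)
lemma cinner_scaleC_right: "cinner x (scaleC c y) = c * cinner x y"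
  by (metis cinner_commute cinner_scaleC_left complex_cnj_cnj complex_cnj_mult)
lemma cinner_self: "Re (cinner x x) = (norm x)\<^sup>2"
  using norm_eq_sqrt_cinner[of x] cinner_ge_zero[of x] by simp
end

lemma cs_Re:
  fixes x y :: "'h::complex_inner"
  shows "Re (cinner x y) \<le> norm x * norm y"
proof (cases "x = 0 \<or> y = 0")
  case True then show ?thesis by (auto simp: cinner_zero_left cinner_zero_right)
next
  case False
  then have nx: "norm x > 0" and ny: "norm y > 0" by auto
  define t where "t = norm x / norm y"
  define c where "c = complex_of_real (- t)"
  have "0 \<le> Re (cinner (x + scaleC c y) (x + scaleC c y))" by (rule cinner_ge_zero)
  also have "\<dots> = Re (cinner x x) + Re (c * cinner x y) + Re (cnj c * cinner y x)
      + Re (cnj c * (c * cinner y y))"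
    by (simp add: cinner_add_left cinner_add_right cinner_scaleC_left cinner_scaleC_right algebra_simps)
  also have "Re (cnj c * cinner y x) = Re (c * cinner x y)"
    using cinner_commute[of y x] by (simp add: c_def)
  also have "Re (c * cinner x y) = - t * Re (cinner x y)" by (simp add: c_def)
  also have "Re (cnj c * (c * cinner y y)) = t^2 * Re (cinner y y)"
    by (simp add: c_def power2_eq_square)
  finally have "0 \<le> (norm x)\<^sup>2 - 2 * t * Re (cinner x y) + t^2 * (norm y)\<^sup>2"
    by (simp add: cinner_self)
  also have "t^2 * (norm y)\<^sup>2 = (norm x)\<^sup>2" using ny by (simp add: t_def power_divide)
  finally have "t * Re (cinner x y) \<le> (norm x)\<^sup>2" by simp
  then have "norm x * Re (cinner x y) \<le> (norm x)\<^sup>2 * norm y"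
    using ny by (simp add: t_def field_simps)
  then show ?thesis using nx by (simp add: power2_eq_square mult_le_cancel_left)
qed

context
  fixes B :: "'a::cstar_algebra set" and \<pi> :: "'a \<Rightarrow> 'h::chilbert_space \<Rightarrow> 'h"
  assumes sub: "star_subalgebra B" and rep: "representation B \<pi>"
begin

lemma pi_add: "b1 \<in> B \<Longrightarrow> b2 \<in> B \<Longrightarrow> \<pi> (b1 + b2) x = \<pi> b1 x + \<pi> b2 x"
  using rep by (simp add: representation_def)
lemma pi_mult: "b1 \<in> B \<Longrightarrow> b2 \<in> B \<Longrightarrow> \<pi> (b1 * b2) x = \<pi> b1 (\<pi> b2 x)"
  using rep by (simp add: representation_def)
lemma pi_scaleC: "b \<in> B \<Longrightarrow> \<pi> (scaleC c b) x = scaleC c (\<pi> b x)"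
  using rep by (simp add: representation_def)
lemma pi_adj: "b \<in> B \<Longrightarrow> cinner (\<pi> b x) y = cinner x (\<pi> (cstar b) y)"
  using rep by (simp add: representation_def)
lemma B_zero: "0 \<in> B" using sub by (simp add: star_subalgebra_def)
lemma B_add: "x \<in> B \<Longrightarrow> y \<in> B \<Longrightarrow> x + y \<in> B" using sub by (simp add: star_subalgebra_def)
lemma B_mult: "x \<in> B \<Longrightarrow> y \<in> B \<Longrightarrow> x * y \<in> B" using sub by (simp add: star_subalgebra_def)
lemma B_scaleC: "x \<in> B \<Longrightarrow> scaleC c x \<in> B" using sub by (simp add: star_subalgebra_def)
lemma B_cstar: "x \<in> B \<Longrightarrow> cstar x \<in> B" using sub by (simp add: star_subalgebra_def)
lemma B_diff: "x \<in> B \<Longrightarrow> y \<in> B \<Longrightarrow> x - y \<in> B"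
proof -
  assume "x \<in> B" "y \<in> B"
  moreover have "scaleC (-1) y = - y" by (metis scaleR_scaleC scaleR_minus1_left of_real_minus of_real_1)
  ultimately show ?thesis using B_add B_scaleC by (metis diff_conv_add_uminus)
qed
lemma pi_zero: "\<pi> 0 x = 0" using pi_add[OF B_zero B_zero, of x] by simp
lemma pi_diff: "b \<in> B \<Longrightarrow> b0 \<in> B \<Longrightarrow> \<pi> b x - \<pi> b0 x = \<pi> (b - b0) x"
  using pi_add[of b0 "b - b0" x] B_diff by simp
lemma B_sum: "(\<And>i. i \<in> F \<Longrightarrow> f i \<in> B) \<Longrightarrow> sum f F \<in> B"
  by (induction F rule: infinite_finite_induct) (auto simp: B_zero B_add)
lemma pi_sum: "(\<And>i. i \<in> F \<Longrightarrow> f i \<in> B) \<Longrightarrow> \<pi> (sum f F) x = (\<Sum>i\<in>F. \<pi> (f i) x)"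
proof (induction F rule: infinite_finite_induct)
  case (insert i F)
  then show ?case using pi_add[of "f i" "sum f F" x] B_sum[of F f] by auto
qed (auto simp: pi_zero)

lemma sq_bound:
  assumes c: "c \<in> B" and M: "0 \<le> M" and bd: "\<And>x. norm (\<pi> (cstar c * c) x) \<le> M * norm x"
  shows "norm (\<pi> c x) \<le> sqrt M * norm x"
proof -
  have "(norm (\<pi> c x))\<^sup>2 = Re (cinner (\<pi> c x) (\<pi> c x))" by (simp add: cinner_self)
  also have "\<dots> = Re (cinner x (\<pi> (cstar c * c) x))"
    using pi_adj[OF c] pi_mult[OF B_cstar[OF c] c] by simp
  also have "\<dots> \<le> norm x * norm (\<pi> (cstar c * c) x)" by (rule cs_Re)
  also have "\<dots> \<le> norm x * (M * norm x)" by (rule mult_left_mono[OF bd]) simp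
  finally have "(norm (\<pi> c x))\<^sup>2 \<le> M * (norm x)\<^sup>2" by (simp add: power2_eq_square algebra_simps)
  then have "norm (\<pi> c x) \<le> sqrt (M * (norm x)\<^sup>2)" by (rule real_le_rsqrt)
  then show ?thesis by (simp add: real_sqrt_mult)
qed

lemma root_iter:
  assumes b: "b \<in> B" and y0: "y 0 = cstar b * b" and ys: "\<And>n. y (Suc n) = y n * y n"
    and yB: "\<And>n. y n \<in> B" and ysa: "\<And>n. cstar (y n) = y n"
  shows "0 \<le> M \<Longrightarrow> (\<And>x. norm (\<pi> (y N) x) \<le> M * norm x) \<Longrightarrow> norm (\<pi> b x) \<le> root (2^(N+1)) M * norm x"
proof (induction N arbitrary: M x)
  case 0
  then show ?case using sq_bound[OF b, of M x] y0 by (simp add: sqrt_def)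
next
  case (Suc N)
  have "norm (\<pi> (y N) x) \<le> sqrt M * norm x" for x
    using sq_bound[OF yB[of N] Suc.prems(1)] Suc.prems(2) ys[of N] ysa[of N] by simp
  then have "norm (\<pi> b x) \<le> root (2^(N+1)) (sqrt M) * norm x"
    using Suc.IH[of "sqrt M"] Suc.prems(1) by simp
  also have "root (2^(N+1)) (sqrt M) = root (2^(Suc N+1)) M"
    by (simp add: sqrt_def real_root_mult_exp[symmetric] mult.commute)
  finally show ?case .
qed

end

lemma representation_mono: "B' \<subseteq> B \<Longrightarrow> representation B \<pi> \<Longrightarrow> representation B' \<pi>"
  unfolding representation_def by blast

lemma cont_bound:
  fixes \<pi> :: "'a::cstar_algebra \<Rightarrow> 'h::chilbert_space \<Rightarrow> 'h"
  assumes sub: "star_subalgebra B" and rep: "representation B \<pi>" and rc: "rep_continuous B \<pi>"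
  shows "\<exists>K\<ge>0. \<forall>c\<in>B. \<forall>x. norm (\<pi> c x) \<le> K * norm c * norm x"
proof -
  obtain d where d: "d > 0" and dd: "\<And>c x. c \<in> B \<Longrightarrow> norm c < d \<Longrightarrow> norm (\<pi> c x - \<pi> 0 x) \<le> 1 * norm x"
    using rc B_zero[OF sub rep] unfolding rep_continuous_def
    by (metis diff_zero zero_less_one)
  have "norm (\<pi> c x) \<le> (2 / d) * norm c * norm x" if c: "c \<in> B" for c x
  proof (cases "c = 0")
    case True then show ?thesis by (simp add: pi_zero[OF sub rep])
  next
    case False
    define r where "r = d / (2 * norm c)"
    have r: "r > 0" using d False by (simp add: r_def)
    have "norm (scaleC (complex_of_real r) c) = r * norm c" using r
      by (simp add: norm_scaleC)
    also have "r * norm c = d / 2" using False by (simp add: r_def)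
    finally have "norm (scaleC (complex_of_real r) c) = d / 2" .
    then have "norm (\<pi> (scaleC (complex_of_real r) c) x) \<le> norm x"
      using dd[OF B_scaleC[OF sub rep c]] d by (simp add: pi_zero[OF sub rep])
    then have "r * norm (\<pi> c x) \<le> norm x" using r
      by (simp add: pi_scaleC[OF sub rep c] norm_scaleC)
    then have "norm (\<pi> c x) \<le> norm x / r" using r by (simp add: field_simps)
    then show ?thesis using False d by (simp add: r_def field_simps)
  qed
  then show ?thesis using d by (intro exI[of _ "2/d"]) auto
qed

theorem mainTheorem5:
  fixes I :: "'i set"
    and p :: "'i \<Rightarrow> 'a::cstar_algebra multiplier"
    and B :: "'a set"
  assumes proj: "\<forall>i\<in>I. mult_projection (p i)"
    and orth: "\<forall>i\<in>I. \<forall>j\<in>I. i \<noteq> j \<longrightarrow> mult_mult (p i) (p j) = mult_zero"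
    and subalg: "star_subalgebra B"
    and decomp: "\<forall>b\<in>B. \<exists>F c. finite F \<and> F \<subseteq> I \<times> I
                     \<and> (\<forall>(i, j)\<in>F. c (i, j) \<in> B \<inter> corner (p i) (p j))
                     \<and> b = (\<Sum>ij\<in>F. c ij)"
    and core: "\<forall>i\<in>I. core_subalgebra TYPE('h::chilbert_space) (B \<inter> corner (p i) (p i))"
  shows "core_subalgebra TYPE('h) B"
proof -
  define L where "L i = fst (p i)" for i
  define R where "R i = snd (p i)" for i
  have dcI: "double_centralizer (p i)" if "i \<in> I" for i using proj that P_dc by blast
  have oL: "L k (L i u) = 0" if "k \<in> I" "i \<in> I" "k \<noteq> i" for k i u
  proof -
    have "fst (p k) \<circ> fst (p i) = (\<lambda>_. 0)" using orth that
      by (metis fst_conv mult_mult_def mult_zero_def)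
    then show ?thesis unfolding L_def by (metis comp_apply)
  qed
  have oR: "R l (R j u) = 0" if "l \<in> I" "j \<in> I" "l \<noteq> j" for l j u
  proof -
    have "snd (p l) \<circ> snd (p j) = (\<lambda>_. 0)" using orth that
      by (metis snd_conv mult_mult_def mult_zero_def)
    then show ?thesis unfolding R_def by (metis comp_apply)
  qed
  have LRc: "R l (L i u) = L i (R l u)" if "l \<in> I" "i \<in> I" for l i u
    using LR_comm[OF dcI[OF that(2)] dcI[OF that(1)]] unfolding L_def R_def by simp
  have L0: "L i 0 = 0" if "i \<in> I" for i using L_zero[OF dcI[OF that]] L_def by simp
  have R0: "R i 0 = 0" if "i \<in> I" for i using R_zero[OF dcI[OF that]] R_def by simp
  have LLi: "L i (L i u) = L i u" if "i \<in> I" for i u using LL proj that L_def by metis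
  have RRi: "R i (R i u) = R i u" if "i \<in> I" for i u using RR proj that R_def by metis
  have comp: "L k (R l z) = (if k = i \<and> l = j then z else 0)"
    if H: "i \<in> I" "j \<in> I" "k \<in> I" "l \<in> I" "z \<in> corner (p i) (p j)" for i j k l z
  proof -
    obtain a where z: "z = L i (R j a)" using H(5) by (auto simp: corner_def L_def R_def)
    have e: "L k (R l z) = L k (L i (R l (R j a)))" using z LRc H by simp
    show ?thesis
    proof (cases "k = i \<and> l = j")
      case True then show ?thesis using e z LLi RRi H by simp
    next
      case False
      then consider "k \<noteq> i" | "l \<noteq> j" by blast
      then show ?thesis
      proof cases
        assume "k \<noteq> i" then show ?thesis using e oL H by simp
      next
        assume "l \<noteq> j" then show ?thesis using e oR H L0 by simp
      qed
    qed
  qed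
  have corner_fix: "L k c = c \<and> R l c = c" if H: "k \<in> I" "l \<in> I" "c \<in> corner (p k) (p l)" for k l c
  proof -
    obtain a where z: "c = L k (R l a)" using H(3) by (auto simp: corner_def L_def R_def)
    then show ?thesis using LLi RRi LRc H by metis
  qed
  have in_corner: "z \<in> corner (p l) (p l)" if "l \<in> I" "L l z = z" "R l z = z" for l z
    using that unfolding corner_def L_def R_def by (metis (mono_tags, lifting) mem_Collect_eq)
  have LRmult: "L k (y * z) = L k y * z" "R k (y * z) = y * R k z" if "k \<in> I" for k y z
    using L_mult[OF dcI[OF that]] R_mult[OF dcI[OF that]] L_def R_def by auto
  have Lstar: "L k (cstar y) = cstar (R k y)" "R k (cstar y) = cstar (L k y)" if "k \<in> I" for k y
    using L_star[of "p k"] R_star[of "p k"] proj that L_def R_def cstar_cstar by metis+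
  have nL: "norm (L k y) \<le> norm y" "norm (R k y) \<le> norm y" if "k \<in> I" for k y
    using norm_L[of "p k"] norm_R[of "p k"] proj that L_def R_def by metis+

  show ?thesis
    unfolding core_subalgebra_def
  proof (intro conjI allI impI subalg)
    fix \<pi> :: "'a \<Rightarrow> 'h \<Rightarrow> 'h"
    assume rep: "representation B \<pi>"
    have "\<exists>K\<ge>0. \<forall>c\<in>B \<inter> corner (p l) (p l). \<forall>x. norm (\<pi> c x) \<le> K * norm c * norm x"
      if "l \<in> I" for l
      using core that cont_bound[of "B \<inter> corner (p l) (p l)" \<pi>] representation_mono[OF _ rep]
      unfolding core_subalgebra_def by blast
    then obtain K where K: "\<And>l. l \<in> I \<Longrightarrow> K l \<ge> 0"
      "\<And>l c x. l \<in> I \<Longrightarrow> c \<in> B \<inter> corner (p l) (p l) \<Longrightarrow> norm (\<pi> c x) \<le> K l * norm c * norm x"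
      by metis
    have offd: "norm (\<pi> c x) \<le> sqrt (K l) * norm c * norm x"
      if kl: "k \<in> I" "l \<in> I" and c: "c \<in> B" "c \<in> corner (p k) (p l)" for k l c x
    proof -
      have cf: "L k c = c" "R l c = c" using corner_fix[OF kl c(2)] by auto
      have "L l (cstar c * c) = cstar c * c" using LRmult(1)[OF kl(2)] Lstar(1)[OF kl(2)] cf by simp
      moreover have "R l (cstar c * c) = cstar c * c" using LRmult(2)[OF kl(2)] cf by simp
      ultimately have cc: "cstar c * c \<in> B \<inter> corner (p l) (p l)"
        using in_corner[OF kl(2)] B_mult[OF subalg rep B_cstar[OF subalg rep c(1)] c(1)] by auto
      have "norm (\<pi> (cstar c * c) x) \<le> (K l * (norm c)\<^sup>2) * norm x" for x
        using K(2)[OF kl(2) cc, of x] by (simp add: cstar_identity power2_eq_square)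
      then have "norm (\<pi> c x) \<le> sqrt (K l * (norm c)\<^sup>2) * norm x"
        using sq_bound[OF subalg rep c(1)] K(1)[OF kl(2)] by simp
      then show ?thesis using K(1)[OF kl(2)] by (simp add: real_sqrt_mult)
    qed
    have contr: "norm (\<pi> b x) \<le> norm b * norm x" if b: "b \<in> B" for b x
    proof -
      obtain F c where F: "finite F" "F \<subseteq> I \<times> I"
        and cF0: "\<forall>(i, j)\<in>F. c (i, j) \<in> B \<inter> corner (p i) (p j)"
        and bF: "b = (\<Sum>ij\<in>F. c ij)"
        using bspec[OF decomp b] by (elim exE conjE) 
      have cF: "c (i, j) \<in> B \<inter> corner (p i) (p j)" if "(i, j) \<in> F" for i j
        using cF0 that by fast
      define S where "S = fst ` F \<union> snd ` F"
      have S: "finite S" "S \<subseteq> I" using F by (auto simp: S_def)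
      define supp where "supp y \<longleftrightarrow> (\<forall>k\<in>I. k \<notin> S \<longrightarrow> L k y = 0 \<and> R k y = 0)" for y
      have Lsum: "L k (sum f A) = (\<Sum>a\<in>A. L k (f a))" "R k (sum f A) = (\<Sum>a\<in>A. R k (f a))"
        if "k \<in> I" for k and f :: "'i \<times> 'i \<Rightarrow> 'a" and A
        using L_sum[OF dcI[OF that]] R_sum[OF dcI[OF that]] L_def R_def by auto
      have supp_b: "supp b" unfolding supp_def
      proof (intro ballI impI conjI)
        fix k assume k: "k \<in> I" "k \<notin> S"
        have "L k (c ij) = 0 \<and> R k (c ij) = 0" if "ij \<in> F" for ij
        proof -
          obtain i j where ij: "ij = (i, j)" by (cases ij) auto
          have ijI: "i \<in> I" "j \<in> I" "i \<in> S" "j \<in> S" using that F ij S_def by (force simp: S_def)+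
          have cc: "c (i, j) \<in> corner (p i) (p j)" using cF that ij by auto
          have "L k (c (i, j)) = L k (L i (c (i, j)))" using corner_fix[OF ijI(1,2) cc] by simp
          also have "\<dots> = 0" using oL k ijI by metis
          finally have 1: "L k (c (i, j)) = 0" .
          have "R k (c (i, j)) = R k (R j (c (i, j)))" using corner_fix[OF ijI(1,2) cc] by simp
          also have "\<dots> = 0" using oR k ijI by metis
          finally show ?thesis using 1 ij by simp
        qed
        then show "L k b = 0" "R k b = 0" using Lsum[OF k(1)] bF by simp_all
      qed
      have supp_mult: "supp (y * z)" if "supp y" "supp z" for y z
        using that LRmult by (simp add: supp_def)
      have supp_star: "supp (cstar y)" if "supp y" for y
        using that Lstar by (simp add: supp_def cstar_zero)
      define C where "C = (\<Sum>kl\<in>S \<times> S. sqrt (K (snd kl)))"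
      have C0: "C \<ge> 0" unfolding C_def using S(2) K(1) by (intro sum_nonneg) (auto simp: subset_iff)
      have suppbd: "norm (\<pi> y x) \<le> C * norm y * norm x" if y: "y \<in> B" "supp y" for y x
      proof -
        obtain G d where G: "finite G" "G \<subseteq> I \<times> I"
          and dG0: "\<forall>(i, j)\<in>G. d (i, j) \<in> B \<inter> corner (p i) (p j)"
          and yG: "y = (\<Sum>ij\<in>G. d ij)"
          using bspec[OF decomp y(1)] by (elim exE conjE) 
        have dG: "d (i, j) \<in> B \<inter> corner (p i) (p j)" if "(i, j) \<in> G" for i j
          using dG0 that by fast
        have dcomp: "d (k, l) = L k (R l y)" if kl: "(k, l) \<in> G" for k l
        proof -
          have klI: "k \<in> I" "l \<in> I" using kl G by auto
          have "L k (R l y) = (\<Sum>ij\<in>G. L k (R l (d ij)))"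
            using yG Lsum[OF klI(1)] Lsum[OF klI(2)] by simp
          also have "\<dots> = (\<Sum>ij\<in>G. if ij = (k, l) then d ij else 0)"
          proof (rule sum.cong[OF refl])
            fix ij assume "ij \<in> G"
            then obtain i j where ij: "ij = (i, j)" "(i, j) \<in> G" by (cases ij) auto
            then have "i \<in> I" "j \<in> I" using G by auto
            then show "L k (R l (d ij)) = (if ij = (k, l) then d ij else 0)"
              using comp[OF _ _ klI, of i j "d (i, j)"] dG[OF ij(2)] ij(1) by auto
          qed
          also have "\<dots> = d (k, l)" using G kl by simp
          finally show ?thesis by simp
        qed
        have dzero: "d ij = 0" if "ij \<in> G - S \<times> S" for ij
        proof -
          obtain k l where ij: "ij = (k, l)" by (cases ij) auto
          have klI: "k \<in> I" "l \<in> I" using that G ij by auto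
          have "k \<notin> S \<or> l \<notin> S" using that ij by auto
          then have "L k (R l y) = 0"
            using y(2) klI LRc L0 R0 unfolding supp_def by metis
          then show ?thesis using dcomp that ij by simp
        qed
        have yG': "y = (\<Sum>ij\<in>G \<inter> S \<times> S. d ij)"
          unfolding yG using G(1) dzero by (intro sum.mono_neutral_right) auto
        have dB: "d ij \<in> B" if "ij \<in> G \<inter> S \<times> S" for ij using dG that by (cases ij) auto
        have "norm (\<pi> y x) = norm (\<Sum>ij\<in>G \<inter> S \<times> S. \<pi> (d ij) x)"
          using pi_sum[OF subalg rep, of "G \<inter> S \<times> S" d x] dB yG' by simp
        also have "\<dots> \<le> (\<Sum>ij\<in>G \<inter> S \<times> S. norm (\<pi> (d ij) x))" by (rule norm_sum)
        also have "\<dots> \<le> (\<Sum>ij\<in>G \<inter> S \<times> S. sqrt (K (snd ij)) * norm y * norm x)"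
        proof (rule sum_mono)
          fix ij assume ijG: "ij \<in> G \<inter> S \<times> S"
          obtain k l where ij: "ij = (k, l)" by (cases ij) auto
          have klI: "k \<in> I" "l \<in> I" using ijG G ij by auto
          have dd: "d (k, l) \<in> B" "d (k, l) \<in> corner (p k) (p l)" using dG ijG ij by auto
          have "norm (d (k, l)) \<le> norm y"
            using dcomp[of k l] ijG ij nL(1)[OF klI(1), of "R l y"] nL(2)[OF klI(2), of y] by auto
          then have "sqrt (K l) * norm (d (k, l)) * norm x \<le> sqrt (K l) * norm y * norm x"
            using K(1)[OF klI(2)] by (intro mult_right_mono mult_left_mono) auto
          then show "norm (\<pi> (d ij) x) \<le> sqrt (K (snd ij)) * norm y * norm x"
            using offd[OF klI dd, of x] ij by simp
        qed
        also have "\<dots> \<le> (\<Sum>ij\<in>S \<times> S. sqrt (K (snd ij)) * norm y * norm x)"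
          using S K(1) by (intro sum_mono2) (auto simp: subset_iff)
        also have "\<dots> = C * norm y * norm x" by (simp add: C_def sum_distrib_right)
        finally show ?thesis .
      qed
      define y where "y = rec_nat (cstar b * b) (\<lambda>_ z. z * z)"
      have y0: "y 0 = cstar b * b" and ys: "\<And>n. y (Suc n) = y n * y n" by (simp_all add: y_def)
      have yB: "y n \<in> B \<and> supp (y n) \<and> cstar (y n) = y n \<and> norm (y n) \<le> norm b ^ (2^(n+1))" for n
      proof (induction n)
        case 0
        then show ?case using y0 B_mult[OF subalg rep B_cstar[OF subalg rep b] b] supp_mult supp_star supp_b
          by (simp add: cstar_mult cstar_cstar cstar_identity power2_eq_square)
      next
        case (Suc n)
        have "norm (y n * y n) \<le> norm (y n) * norm (y n)" by (rule norm_mult_ineq)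
        also have "\<dots> \<le> norm b ^ (2^(n+1)) * norm b ^ (2^(n+1))"
          using Suc.IH by (intro mult_mono) auto
        also have "\<dots> = norm b ^ (2^(Suc n+1))" by (simp flip: power_add)
        finally show ?case using Suc.IH ys[of n] B_mult[OF subalg rep] supp_mult
          by (simp add: cstar_mult)
      qed
      define C1 where "C1 = C + 1"
      have C1: "C1 > 0" using C0 by (simp add: C1_def)
      have bd: "norm (\<pi> b x) \<le> root (2^(N+1)) C1 * norm b * norm x" for N
      proof -
        have "norm (\<pi> (y N) x) \<le> (C1 * norm b ^ (2^(N+1))) * norm x" for x
        proof -
          have "norm (\<pi> (y N) x) \<le> C * norm (y N) * norm x" using suppbd yB by blast
          also have "\<dots> \<le> C1 * norm b ^ (2^(N+1)) * norm x"
            using yB[of N] C0 by (intro mult_right_mono mult_mono) (auto simp: C1_def)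
          finally show ?thesis by simp
        qed
        then have "norm (\<pi> b x) \<le> root (2^(N+1)) (C1 * norm b ^ (2^(N+1))) * norm x"
          using root_iter[OF subalg rep b y0 ys] yB C1 by simp
        also have "root (2^(N+1)) (C1 * norm b ^ (2^(N+1))) = root (2^(N+1)) C1 * norm b"
          by (simp add: real_root_mult real_root_power_cancel del: power_Suc)
        finally show ?thesis .
      qed
      have lim: "(\<lambda>N. root (2^(N+1)) C1 * norm b * norm x) \<longlonglongrightarrow> 1 * norm b * norm x"
      proof (intro tendsto_mult_right)
        have sm: "strict_mono (\<lambda>N::nat. 2^(N+1) :: nat)" by (rule strict_monoI) simp
        show "(\<lambda>N. root (2^(N+1)) C1) \<longlonglongrightarrow> 1"
          using LIMSEQ_subseq_LIMSEQ[OF LIMSEQ_root_const[OF C1] sm] by (simp add: o_def)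
      qed
      show ?thesis using LIMSEQ_le_const[OF lim] bd by auto
    qed
    show "rep_continuous B \<pi>"
      unfolding rep_continuous_def
    proof (intro ballI allI impI)
      fix b0 b :: 'a and e :: real and x
      assume "b0 \<in> B" "b \<in> B" "e > 0"
      then show "\<exists>d>0. \<forall>b\<in>B. norm (b - b0) < d \<longrightarrow> (\<forall>x. norm (\<pi> b x - \<pi> b0 x) \<le> e * norm x)"
      proof (intro exI[of _ e] conjI ballI impI allI)
        fix b x assume bB: "b \<in> B" and lt: "norm (b - b0) < e"
        have "norm (\<pi> b x - \<pi> b0 x) = norm (\<pi> (b - b0) x)"
          using pi_diff[OF subalg rep bB \<open>b0 \<in> B\<close>] by simp
        also have "\<dots> \<le> norm (b - b0) * norm x" using contr B_diff[OF subalg rep bB \<open>b0 \<in> B\<close>] by blast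
        also have "\<dots> \<le> e * norm x" using lt by (simp add: mult_right_mono)
        finally show "norm (\<pi> b x - \<pi> b0 x) \<le> e * norm x" .
      qed (use \<open>e > 0\<close> in auto)
    qed
  qed
qed

end
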